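(* Let $M$ be an algebraic number field of degree $m$ with ring of integers $\mathbb{Z}_M$ and integral basis $(1,\omega_2,\ldots,\omega_m)$. Let $\alpha$ be an algebraic integer over $M$ of degree $n$ over $M$, let $K=M(\alpha)$, and let $0\neq\mu\in\mathbb{Z}_M$. Define the constants $c_{hji}$, $c_{hi}$, $c_2$, $c_5$, $d_{hi}$ as follows: \[ c_{hji}=\tfrac12\left|\alpha^{(hj)}-\alpha^{(hi)}\right|\ (i\ne j),\qquad c_{hi}=\frac{|\mu^{(h)}|}{\prod_{1\le j\le n,\,j\ne i}c_{hji}},\qquad c_5=2c_2\,\overline{|\alpha|},\qquad d_{hi}=c_{hi}\,c_5^{\,n-1}, \] where $c_2$ is the row norm (maximum absolute row sum) of $S^{-1}$, $S$ being the $m\times m$ matrix whose $j$-th row is $(1,\omega_2^{(j)},\ldots,\omega_m^{(j)})$. Fix indices $1\le h\le m$, $1\le i\le n$ and a constant $H>0$. Let $\mathcal{L}\subset\mathbb{R}^{2m+2}$ be the lattice generated by the $2m$ columns of the $(2m+2)\times 2m$ matrix whose first $2m$ rows form the $2m\times 2m$ identity matrix and whose last two rows are \[ \big(H\,\mathrm{Re}(1),\ H\,\mathrm{Re}(\omega_2^{(h)}),\ldots,H\,\mathrm{Re}(\omega_m^{(h)}),\ H\,\mathrm{Re}(\alpha^{(hi)}),\ H\,\mathrm{Re}(\alpha^{(hi)}\omega_2^{(h)}),\ldots,H\,\mathrm{Re}(\alpha^{(hi)}\omega_m^{(h)})\big), \] \[ \big(H\,\mathrm{Im}(1),\ H\,\mathrm{Im}(\omega_2^{(h)}),\ldots,H\,\mathrm{Im}(\omega_m^{(h)}),\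 H\,\mathrm{Im}(\alpha^{(hi)}),\ H\,\mathrm{Im}(\alpha^{(hi)}\omega_2^{(h)}),\ldots,H\,\mathrm{Im}(\alpha^{(hi)}\omega_m^{(h)})\big) \] (so the first entries of these two rows are $H$ and $0$). Let $b_1$ be the first vector of an LLL-reduced basis of $\mathcal{L}$. Assume that $x_1,\ldots,x_m,y_1,\ldots,y_m$ are integers, not all zero, with $A=\max(\max_k|x_k|,\max_k|y_k|)$, such that \[ \Big|x_1+\omega_2^{(h)}x_2+\cdots+\omega_m^{(h)}x_m-\alpha^{(hi)}y_1-\alpha^{(hi)}\omega_2^{(h)}y_2-\cdots-\alpha^{(hi)}\omega_m^{(h)}y_m\Big|\le d_{hi}\,A^{1-n}. \] If $A\le A_0$ for some constant $A_0>0$ and \[ |b_1|\ge\sqrt{(2m+1)\,2^{2m-1}}\cdot A_0, \] then \[ A\le\left(\frac{d_{hi}\,H}{A_0}\right)^{\frac{1}{n-1}}. \]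
   Context: Let $\sigma_1,\ldots,\sigma_m$ be the embeddings of $M$ into $\mathbb{C}$; for $\gamma\in M$ write $\gamma^{(j)}=\sigma_j(\gamma)$. Let $f(x)$ be the monic relative defining polynomial of $\alpha$ over $M$, and for $j=1,\ldots,m$ let $\alpha^{(j1)},\ldots,\alpha^{(jn)}$ be the roots of the polynomial obtained by applying $\sigma_j$ to the coefficients of $f$. The size $\overline{|\alpha|}$ is $\max_{j,k}|\alpha^{(jk)}|$. $|\cdot|$ on vectors is the Euclidean norm. An LLL-reduced basis is meant in the sense of Lenstra–Lenstra–Lovász (with the standard parameter $3/4$, as extended by Pohst), so that its first vector satisfies $|b_1|^2\le 2^{2m-1}|v|^2$ for every nonzero $v\in\mathcal{L}$ (the lattice having rank $2m$). *)

theory Defs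
  imports "HOL-Analysis.Analysis" "HOL-Computational_Algebra.Polynomial"
begin

definition subfield_C :: "complex set \<Rightarrow> bool" where
  "subfield_C M \<longleftrightarrow> 0 \<in> M \<and> 1 \<in> M \<and>
     (\<forall>x\<in>M. \<forall>y\<in>M. x + y \<in> M \<and> x - y \<in> M \<and> x * y \<in> M) \<and>
     (\<forall>x\<in>M. inverse x \<in> M)"

definition Q_basis :: "complex set \<Rightarrow> nat \<Rightarrow> (nat \<Rightarrow> complex) \<Rightarrow> bool" where
  "Q_basis M m \<omega> \<longleftrightarrow> (\<forall>k\<in>{1..m}. \<omega> k \<in> M) \<and>
     (\<forall>z\<in>M. \<exists>!c::nat \<Rightarrow> rat. (\<forall>k. k \<notin> {1..m} \<longrightarrow> c k = 0) \<and>
                 z = (\<Sum>k=1..m. of_rat (c k) * \<omega> k))"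

definition integral_basis :: "complex set \<Rightarrow> nat \<Rightarrow> (nat \<Rightarrow> complex) \<Rightarrow> bool" where
  "integral_basis M m \<omega> \<longleftrightarrow> (\<forall>k\<in>{1..m}. \<omega> k \<in> M \<and> algebraic_int (\<omega> k)) \<and>
     (\<forall>z\<in>M. algebraic_int z \<longrightarrow>
        (\<exists>!c::nat \<Rightarrow> int. (\<forall>k. k \<notin> {1..m} \<longrightarrow> c k = 0) \<and>
                 z = (\<Sum>k=1..m. of_int (c k) * \<omega> k)))"

text \<open>sigma 1, ..., sigma m are pairwise distinct field embeddings of M into C
  (as m is the degree, these are all of them).\<close>
definition embeddings :: "complex set \<Rightarrow> nat \<Rightarrow> (nat \<Rightarrow> complex \<Rightarrow> complex) \<Rightarrow> bool" where
  "embeddings M m \<sigma> \<longleftrightarrow>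
     (\<forall>j\<in>{1..m}. \<sigma> j 1 = 1 \<and>
        (\<forall>x\<in>M. \<forall>y\<in>M. \<sigma> j (x + y) = \<sigma> j x + \<sigma> j y \<and> \<sigma> j (x * y) = \<sigma> j x * \<sigma> j y)) \<and>
     (\<forall>j\<in>{1..m}. \<forall>j'\<in>{1..m}. j \<noteq> j' \<longrightarrow> (\<exists>x\<in>M. \<sigma> j x \<noteq> \<sigma> j' x))"

definition rel_min_poly :: "complex set \<Rightarrow> complex \<Rightarrow> complex poly \<Rightarrow> nat \<Rightarrow> bool" where
  "rel_min_poly M \<alpha> f n \<longleftrightarrow> lead_coeff f = 1 \<and> (\<forall>k. coeff f k \<in> M) \<and> poly f \<alpha> = 0 \<and>
     degree f = n \<and>
     (\<forall>g. g \<noteq> 0 \<and> (\<forall>k. coeff g k \<in> M) \<and> poly g \<alpha> = 0 \<longrightarrow> n \<le> degree g)"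

text \<open>a j 1, ..., a j n are the roots of sigma_j(f), i.e. the relative conjugates alpha^(jk).\<close>
definition conjugates :: "nat \<Rightarrow> nat \<Rightarrow> (nat \<Rightarrow> complex \<Rightarrow> complex) \<Rightarrow> complex poly
     \<Rightarrow> (nat \<Rightarrow> nat \<Rightarrow> complex) \<Rightarrow> bool" where
  "conjugates m n \<sigma> f a \<longleftrightarrow>
     (\<forall>j\<in>{1..m}. map_poly (\<sigma> j) f = (\<Prod>k=1..n. [:- a j k, 1:]))"

definition alpha_size :: "nat \<Rightarrow> nat \<Rightarrow> (nat \<Rightarrow> nat \<Rightarrow> complex) \<Rightarrow> real" where
  "alpha_size m n a = Max {cmod (a j k) | j k. j \<in> {1..m} \<and> k \<in> {1..n}}"

definition c_hji :: "(nat \<Rightarrow> nat \<Rightarrow> complex) \<Rightarrow> nat \<Rightarrow> nat \<Rightarrow> nat \<Rightarrow> real" where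
  "c_hji a h j i = cmod (a h j - a h i) / 2"

definition c_hi :: "nat \<Rightarrow> (nat \<Rightarrow> complex \<Rightarrow> complex) \<Rightarrow> complex \<Rightarrow> (nat \<Rightarrow> nat \<Rightarrow> complex)
     \<Rightarrow> nat \<Rightarrow> nat \<Rightarrow> real" where
  "c_hi n \<sigma> \<mu> a h i = cmod (\<sigma> h \<mu>) / (\<Prod>j\<in>{1..n} - {i}. c_hji a h j i)"

definition S_mat :: "(nat \<Rightarrow> complex \<Rightarrow> complex) \<Rightarrow> (nat \<Rightarrow> complex) \<Rightarrow> nat \<Rightarrow> nat \<Rightarrow> complex" where
  "S_mat \<sigma> \<omega> j k = \<sigma> j (\<omega> k)"

definition mat_inverse :: "nat \<Rightarrow> (nat \<Rightarrow> nat \<Rightarrow> complex) \<Rightarrow> nat \<Rightarrow> nat \<Rightarrow> complex" where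
  "mat_inverse m S = (THE T. (\<forall>r\<in>{1..m}. \<forall>c\<in>{1..m}.
        (\<Sum>k=1..m. T r k * S k c) = (if r = c then 1 else 0)) \<and>
      (\<forall>r c. r \<notin> {1..m} \<or> c \<notin> {1..m} \<longrightarrow> T r c = 0))"

definition row_norm :: "nat \<Rightarrow> (nat \<Rightarrow> nat \<Rightarrow> complex) \<Rightarrow> real" where
  "row_norm m T = Max ((\<lambda>r. \<Sum>k=1..m. cmod (T r k)) ` {1..m})"

definition c_2 :: "nat \<Rightarrow> (nat \<Rightarrow> complex \<Rightarrow> complex) \<Rightarrow> (nat \<Rightarrow> complex) \<Rightarrow> real" where
  "c_2 m \<sigma> \<omega> = row_norm m (mat_inverse m (S_mat \<sigma> \<omega>))"

definition c_5 :: "nat \<Rightarrow> nat \<Rightarrow> (nat \<Rightarrow> complex \<Rightarrow> complex) \<Rightarrow> (nat \<Rightarrow> complex)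
     \<Rightarrow> (nat \<Rightarrow> nat \<Rightarrow> complex) \<Rightarrow> real" where
  "c_5 m n \<sigma> \<omega> a = 2 * c_2 m \<sigma> \<omega> * alpha_size m n a"

definition d_hi :: "nat \<Rightarrow> nat \<Rightarrow> (nat \<Rightarrow> complex \<Rightarrow> complex) \<Rightarrow> (nat \<Rightarrow> complex) \<Rightarrow> complex
     \<Rightarrow> (nat \<Rightarrow> nat \<Rightarrow> complex) \<Rightarrow> nat \<Rightarrow> nat \<Rightarrow> real" where
  "d_hi m n \<sigma> \<omega> \<mu> a h i = c_hi n \<sigma> \<mu> a h i * c_5 m n \<sigma> \<omega> a ^ (n - 1)"

definition vinner :: "nat \<Rightarrow> (nat \<Rightarrow> real) \<Rightarrow> (nat \<Rightarrow> real) \<Rightarrow> real" where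
  "vinner N u v = (\<Sum>t=1..N. u t * v t)"

definition vnorm :: "nat \<Rightarrow> (nat \<Rightarrow> real) \<Rightarrow> real" where
  "vnorm N u = sqrt (vinner N u u)"

definition lattice_gen :: "nat \<Rightarrow> (nat \<Rightarrow> nat \<Rightarrow> real) \<Rightarrow> (nat \<Rightarrow> real) set" where
  "lattice_gen k g = {(\<lambda>t. \<Sum>s=1..k. of_int (z s) * g s t) | z :: nat \<Rightarrow> int. True}"

definition lattice_basis :: "(nat \<Rightarrow> real) set \<Rightarrow> nat \<Rightarrow> (nat \<Rightarrow> nat \<Rightarrow> real) \<Rightarrow> bool" where
  "lattice_basis L k b \<longleftrightarrow> lattice_gen k b = L \<and>
     (\<forall>z :: nat \<Rightarrow> int. (\<forall>t. (\<Sum>s=1..k. of_int (z s) * b s t) = 0) \<longrightarrow> (\<forall>s\<in>{1..k}. z s = 0))"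

text \<open>LLL-reduced (parameter 3/4): bs is the Gram--Schmidt orthogonalisation of b with
  coefficients mu, which are size-reduced, and the Lovasz condition holds.\<close>
definition LLL_reduced :: "nat \<Rightarrow> nat \<Rightarrow> (nat \<Rightarrow> nat \<Rightarrow> real) \<Rightarrow> bool" where
  "LLL_reduced N k b \<longleftrightarrow> (\<exists>bs :: nat \<Rightarrow> nat \<Rightarrow> real. \<exists>mu :: nat \<Rightarrow> nat \<Rightarrow> real.
     (\<forall>i\<in>{1..k}. \<forall>t. b i t = bs i t + (\<Sum>j\<in>{1..<i}. mu i j * bs j t)) \<and>
     (\<forall>i\<in>{1..k}. \<forall>j\<in>{1..<i}. vinner N (bs i) (bs j) = 0) \<and>
     (\<forall>i\<in>{1..k}. \<forall>j\<in>{1..<i}. \<bar>mu i j\<bar> \<le> 1/2) \<and>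
     (\<forall>i\<in>{2..k}. vinner N (\<lambda>t. bs i t + mu i (i - 1) * bs (i - 1) t)
                               (\<lambda>t. bs i t + mu i (i - 1) * bs (i - 1) t)
                  \<ge> 3/4 * vinner N (bs (i - 1)) (bs (i - 1))))"

text \<open>The 2m generators (columns) of the lattice L in R^(2m+2) for fixed h, i, H.\<close>
definition gen_col :: "nat \<Rightarrow> (nat \<Rightarrow> complex \<Rightarrow> complex) \<Rightarrow> (nat \<Rightarrow> complex)
     \<Rightarrow> (nat \<Rightarrow> nat \<Rightarrow> complex) \<Rightarrow> nat \<Rightarrow> nat \<Rightarrow> real \<Rightarrow> nat \<Rightarrow> nat \<Rightarrow> real" where
  "gen_col m \<sigma> \<omega> a h i H s t =
     (let e = (if s \<le> m then \<sigma> h (\<omega> s) else a h i * \<sigma> h (\<omega> (s - m))) in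
      if t \<in> {1..2*m} then (if t = s then 1 else 0)
      else if t = 2*m + 1 then H * Re e
      else if t = 2*m + 2 then H * Im e
      else 0)"

end

theory Submission
  imports Defs
begin

lemma vinner_comm: "vinner N u v = vinner N v u"
  unfolding vinner_def by (simp add: mult.commute)

lemma vinner_sum_left: "vinner N (\<lambda>t. \<Sum>j\<in>J. c j * u j t) w = (\<Sum>j\<in>J. c j * vinner N (u j) w)"
  unfolding vinner_def by (simp add: sum_distrib_left sum_distrib_right mult.assoc sum.swap[of _ J])

lemma vinner_add_left: "vinner N (\<lambda>t. u t + v t) w = vinner N u w + vinner N v w"
  unfolding vinner_def by (simp add: distrib_right sum.distrib)

lemma vinner_nonneg: "vinner N u u \<ge> 0"
  unfolding vinner_def by (simp add: sum_nonneg)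

lemma vinner_diff_expand: "vinner N (\<lambda>t. v t - c * u t) (\<lambda>t. v t - c * u t)
   = vinner N v v - 2 * c * vinner N v u + c^2 * vinner N u u"
  unfolding vinner_def
  by (simp add: power2_eq_square algebra_simps sum.distrib sum_subtractf sum_distrib_left)

lemma lll_short:
  assumes lll: "LLL_reduced N k b" and k1: "1 \<le> k"
    and v: "v = (\<lambda>t. \<Sum>s=1..k. of_int (z s) * b s t)"
    and nz: "\<exists>s\<in>{1..k}. z s \<noteq> 0"
  shows "vinner N (b 1) (b 1) \<le> 2^(k-1) * vinner N v v"
proof -
  obtain bs mu where
    bdef: "\<forall>i\<in>{1..k}. \<forall>t. b i t = bs i t + (\<Sum>j\<in>{1..<i}. mu i j * bs j t)" and
    orth: "\<forall>i\<in>{1..k}. \<forall>j\<in>{1..<i}. vinner N (bs i) (bs j) = 0" and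
    szr: "\<forall>i\<in>{1..k}. \<forall>j\<in>{1..<i}. \<bar>mu i j\<bar> \<le> 1/2" and
    lov: "\<forall>i\<in>{2..k}. vinner N (\<lambda>t. bs i t + mu i (i - 1) * bs (i - 1) t)
                               (\<lambda>t. bs i t + mu i (i - 1) * bs (i - 1) t)
                  \<ge> 3/4 * vinner N (bs (i - 1)) (bs (i - 1))"
    using lll unfolding LLL_reduced_def by blast
  have b1: "b 1 = bs 1" using bdef k1 by auto
  have step: "vinner N (bs i) (bs i) \<ge> 1/2 * vinner N (bs (i-1)) (bs (i-1))" if i: "i \<in> {2..k}" for i
  proof -
    let ?m = "mu i (i-1)"
    have o: "vinner N (bs i) (bs (i-1)) = 0" using orth i by auto
    have "vinner N (\<lambda>t. bs i t + ?m * bs (i - 1) t) (\<lambda>t. bs i t + ?m * bs (i - 1) t)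
       = vinner N (bs i) (bs i) + 2 * ?m * vinner N (bs i) (bs (i-1)) + ?m^2 * vinner N (bs (i-1)) (bs (i-1))"
      unfolding vinner_def
      by (simp add: power2_eq_square algebra_simps sum.distrib sum_distrib_left)
    also have "\<dots> = vinner N (bs i) (bs i) + ?m^2 * vinner N (bs (i-1)) (bs (i-1))" using o by simp
    also have "\<dots> \<le> vinner N (bs i) (bs i) + 1/4 * vinner N (bs (i-1)) (bs (i-1))"
    proof -
      have "\<bar>?m\<bar> \<le> 1/2" using szr i by auto
      hence "?m^2 \<le> (1/2)^2" by (metis abs_ge_zero power2_abs power_mono)
      hence "?m^2 * vinner N (bs (i-1)) (bs (i-1)) \<le> (1/2)^2 * vinner N (bs (i-1)) (bs (i-1))"
        using vinner_nonneg[of N "bs (i-1)"] by (rule mult_right_mono)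
      thus ?thesis by (simp add: power2_eq_square)
    qed
    finally have "vinner N (\<lambda>t. bs i t + ?m * bs (i - 1) t) (\<lambda>t. bs i t + ?m * bs (i - 1) t)
       \<le> vinner N (bs i) (bs i) + 1/4 * vinner N (bs (i-1)) (bs (i-1))" .
    moreover have "vinner N (\<lambda>t. bs i t + ?m * bs (i - 1) t) (\<lambda>t. bs i t + ?m * bs (i - 1) t)
       \<ge> 3/4 * vinner N (bs (i - 1)) (bs (i - 1))" using lov i by blast
    ultimately show ?thesis by linarith
  qed
  have decay: "i \<in> {1..k} \<Longrightarrow> vinner N (bs i) (bs i) \<ge> (1/2)^(i-1) * vinner N (bs 1) (bs 1)" for i
  proof (induction i)
    case 0 then show ?case by simp
  next
    case (Suc i)
    show ?case
    proof (cases "i = 0")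
      case True then show ?thesis by simp
    next
      case False
      hence ih: "vinner N (bs i) (bs i) \<ge> (1/2)^(i-1) * vinner N (bs 1) (bs 1)" using Suc by auto
      have "vinner N (bs (Suc i)) (bs (Suc i)) \<ge> 1/2 * vinner N (bs i) (bs i)"
        using step[of "Suc i"] Suc.prems False by auto
      have e: "(1/2::real)^(Suc i - 1) = 1/2 * (1/2)^(i-1)" using False
        by (metis Suc_pred diff_Suc_1 neq0_conv power_Suc)
      have "(1/2::real)^(Suc i - 1) * vinner N (bs 1) (bs 1) = 1/2 * ((1/2)^(i-1) * vinner N (bs 1) (bs 1))"
        unfolding e by (simp only: mult.assoc)
      also have "\<dots> \<le> 1/2 * vinner N (bs i) (bs i)" using ih by (rule mult_left_mono) simp
      also have "\<dots> \<le> vinner N (bs (Suc i)) (bs (Suc i))" by fact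
      finally show ?thesis .
    qed
  qed
  define S where "S = {s\<in>{1..k}. z s \<noteq> 0}"
  define J where "J = Max S"
  have Sfin: "finite S" and Sne: "S \<noteq> {}" using nz by (auto simp: S_def)
  have JS: "J \<in> S" using Max_in[OF Sfin Sne] J_def by simp
  hence J: "J \<in> {1..k}" "z J \<noteq> 0" by (auto simp: S_def)
  have zJ: "\<And>s. s \<in> {1..k} \<Longrightarrow> J < s \<Longrightarrow> z s = 0"
    using Max_ge[OF Sfin] J_def S_def by fastforce
  have bsJ: "vinner N (b s) (bs J) = (if s = J then vinner N (bs J) (bs J) else 0)"
    if s: "s \<in> {1..J}" for s
  proof -
    have sk: "s \<in> {1..k}" using s J by auto
    have "vinner N (b s) (bs J) = vinner N (\<lambda>t. bs s t + (\<Sum>j\<in>{1..<s}. mu s j * bs j t)) (bs J)"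
      using bdef sk by (metis (no_types, lifting) ext)
    also have "\<dots> = vinner N (bs s) (bs J) + (\<Sum>j\<in>{1..<s}. mu s j * vinner N (bs j) (bs J))"
      by (simp add: vinner_add_left vinner_sum_left)
    also have "(\<Sum>j\<in>{1..<s}. mu s j * vinner N (bs j) (bs J)) = 0"
      using orth J s by (auto intro!: sum.neutral simp: vinner_comm[of N "bs _" "bs J"])
    also have "vinner N (bs s) (bs J) = (if s = J then vinner N (bs J) (bs J) else 0)"
      using orth J s sk vinner_comm[of N "bs s" "bs J"] by auto
    finally show ?thesis by simp
  qed
  have vJ: "vinner N v (bs J) = of_int (z J) * vinner N (bs J) (bs J)"
  proof -
    have "vinner N v (bs J) = (\<Sum>s=1..k. of_int (z s) * vinner N (b s) (bs J))"
      unfolding v by (rule vinner_sum_left)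
    also have "\<dots> = (\<Sum>s=1..J. of_int (z s) * vinner N (b s) (bs J))"
    proof (rule sum.mono_neutral_right)
      show "\<forall>s\<in>{1..k} - {1..J}. of_int (z s) * vinner N (b s) (bs J) = 0"
        using zJ by auto
    qed (use J in auto)
    also have "\<dots> = (\<Sum>s=1..J. if s = J then of_int (z J) * vinner N (bs J) (bs J) else 0)"
      by (rule sum.cong) (auto simp: bsJ)
    also have "\<dots> = of_int (z J) * vinner N (bs J) (bs J)" using J by simp
    finally show ?thesis .
  qed
  have "0 \<le> vinner N (\<lambda>t. v t - of_int (z J) * bs J t) (\<lambda>t. v t - of_int (z J) * bs J t)"
    by (rule vinner_nonneg)
  also have "\<dots> = vinner N v v - (of_int (z J))^2 * vinner N (bs J) (bs J)"
    by (simp add: vinner_diff_expand vJ power2_eq_square)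
  finally have "(of_int (z J))^2 * vinner N (bs J) (bs J) \<le> vinner N v v" by simp
  moreover have zJ1: "(of_int (z J) :: real)^2 \<ge> 1"
  proof -
    have "1 \<le> \<bar>z J\<bar>" using J(2) by linarith
    hence "1 \<le> \<bar>z J\<bar>^2" by (rule one_le_power)
    hence "1 \<le> (z J)^2" by simp
    hence "(1::real) \<le> of_int ((z J)^2)" by linarith
    thus ?thesis by simp
  qed
  ultimately have vv: "vinner N (bs J) (bs J) \<le> vinner N v v"
  proof -
    have "1 * vinner N (bs J) (bs J) \<le> (of_int (z J))^2 * vinner N (bs J) (bs J)"
      using zJ1 vinner_nonneg[of N "bs J"] by (rule mult_right_mono)
    thus ?thesis using \<open>(of_int (z J))^2 * vinner N (bs J) (bs J) \<le> vinner N v v\<close> by simp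
  qed
  have "(1/2::real)^(k-1) \<le> (1/2)^(J-1)"
    using J by (intro power_decreasing) auto
  hence "(1/2::real)^(k-1) * vinner N (bs 1) (bs 1) \<le> vinner N (bs J) (bs J)"
    using mult_right_mono[OF _ vinner_nonneg[of N "bs 1"]] decay[OF J(1)] order_trans by blast
  hence "(1/2::real)^(k-1) * vinner N (b 1) (b 1) \<le> vinner N v v" using vv b1 by simp
  hence "2^(k-1) * ((1/2::real)^(k-1) * vinner N (b 1) (b 1)) \<le> 2^(k-1) * vinner N v v"
    by simp
  thus ?thesis by (simp add: power_one_over)
qed

theorem theorem3:
  fixes M :: "complex set" and m n h i :: nat
    and \<omega> :: "nat \<Rightarrow> complex" and \<sigma> :: "nat \<Rightarrow> complex \<Rightarrow> complex"
    and \<alpha> \<mu> :: complex and f :: "complex poly" and a :: "nat \<Rightarrow> nat \<Rightarrow> complex"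
    and H A0 :: real and b :: "nat \<Rightarrow> nat \<Rightarrow> real" and x y :: "nat \<Rightarrow> int"
  assumes field: "subfield_C M"
    and deg: "Q_basis M m \<omega>"
    and intbasis: "integral_basis M m \<omega>"
    and om1: "\<omega> 1 = 1"
    and emb: "embeddings M m \<sigma>"
    and alg: "algebraic_int \<alpha>"
    and minpoly: "rel_min_poly M \<alpha> f n"
    and conj: "conjugates m n \<sigma> f a"
    and n2: "n \<ge> 2"
    and mu: "\<mu> \<in> M" "algebraic_int \<mu>" "\<mu> \<noteq> 0"
    and hi: "h \<in> {1..m}" "i \<in> {1..n}"
    and Hpos: "H > 0"
    and basis: "lattice_basis (lattice_gen (2*m) (gen_col m \<sigma> \<omega> a h i H)) (2*m) b"
    and lll: "LLL_reduced (2*m+2) (2*m) b"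
    and nz: "\<exists>k\<in>{1..m}. x k \<noteq> 0 \<or> y k \<noteq> 0"
    and approx: "cmod ((\<Sum>k=1..m. \<sigma> h (\<omega> k) * of_int (x k))
                   - (\<Sum>k=1..m. a h i * \<sigma> h (\<omega> k) * of_int (y k)))
                 \<le> d_hi m n \<sigma> \<omega> \<mu> a h i *
                   real_of_int (max (Max ((\<lambda>k. \<bar>x k\<bar>) ` {1..m})) (Max ((\<lambda>k. \<bar>y k\<bar>) ` {1..m})))
                     powr (1 - real n)"
    and A0pos: "A0 > 0"
    and AleA0: "real_of_int (max (Max ((\<lambda>k. \<bar>x k\<bar>) ` {1..m})) (Max ((\<lambda>k. \<bar>y k\<bar>) ` {1..m}))) \<le> A0"
    and b1big: "vnorm (2*m+2) (b 1) \<ge> sqrt ((2*m+1) * 2^(2*m-1)) * A0"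
  shows "real_of_int (max (Max ((\<lambda>k. \<bar>x k\<bar>) ` {1..m})) (Max ((\<lambda>k. \<bar>y k\<bar>) ` {1..m})))
           \<le> (d_hi m n \<sigma> \<omega> \<mu> a h i * H / A0) powr (1 / (real n - 1))"
proof -
  define Ai where "Ai = max (Max ((\<lambda>k. \<bar>x k\<bar>) ` {1..m})) (Max ((\<lambda>k. \<bar>y k\<bar>) ` {1..m}))"
  define A where "A = real_of_int Ai"
  define d where "d = d_hi m n \<sigma> \<omega> \<mu> a h i"
  define L where "L = (\<Sum>k=1..m. \<sigma> h (\<omega> k) * of_int (x k)) - (\<Sum>k=1..m. a h i * \<sigma> h (\<omega> k) * of_int (y k))"
  have m1: "1 \<le> m" using hi by auto
  have xle: "\<bar>x k\<bar> \<le> Ai" if "k \<in> {1..m}" for k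
    unfolding Ai_def using that by (intro max.coboundedI1 Max_ge) auto
  have yle: "\<bar>y k\<bar> \<le> Ai" if "k \<in> {1..m}" for k
    unfolding Ai_def using that by (intro max.coboundedI2 Max_ge) auto
  have A1: "1 \<le> A"
  proof -
    obtain k where k: "k \<in> {1..m}" "x k \<noteq> 0 \<or> y k \<noteq> 0" using nz by blast
    hence "1 \<le> Ai" using xle[OF k(1)] yle[OF k(1)] by auto
    thus ?thesis unfolding A_def by simp
  qed
  have approx': "cmod L \<le> d * A powr (1 - real n)"
    using approx unfolding L_def d_def A_def Ai_def .
  have AA0: "A \<le> A0" using AleA0 unfolding A_def Ai_def .
  define z where "z s = (if s \<le> m then x s else - y (s - m))" for s
  define e where "e s = (if s \<le> m then \<sigma> h (\<omega> s) else a h i * \<sigma> h (\<omega> (s - m)))" for s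
  define v where "v = (\<lambda>t. \<Sum>s=1..2*m. of_int (z s) * gen_col m \<sigma> \<omega> a h i H s t)"
  have zle: "\<bar>z s\<bar> \<le> Ai" if "s \<in> {1..2*m}" for s
  proof (cases "s \<le> m")
    case True thus ?thesis using that xle[of s] by (auto simp: z_def)
  next
    case False
    hence "s - m \<in> {1..m}" using that by auto
    thus ?thesis using False yle[of "s-m"] by (auto simp: z_def)
  qed
  have vlow: "v t = of_int (z t)" if t: "t \<in> {1..2*m}" for t
  proof -
    have "v t = (\<Sum>s=1..2*m. if s = t then of_int (z s) else 0)"
      unfolding v_def by (rule sum.cong) (use t in \<open>auto simp: gen_col_def Let_def\<close>)
    also have "\<dots> = of_int (z t)" using t by simp
    finally show ?thesis .
  qed
  have sumL: "(\<Sum>s=1..2*m. of_int (z s) * e s) = L"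
  proof -
    have split: "{1..2*m} = {1..m} \<union> {m+1..m+m}" by auto
    have "(\<Sum>s=1..2*m. of_int (z s) * e s) = (\<Sum>s=1..m. of_int (z s) * e s) + (\<Sum>s=m+1..m+m. of_int (z s) * e s)"
      unfolding split by (rule sum.union_disjoint) auto
    also have "(\<Sum>s=1..m. of_int (z s) * e s) = (\<Sum>k=1..m. \<sigma> h (\<omega> k) * of_int (x k))"
      by (rule sum.cong) (auto simp: z_def e_def)
    also have "(\<Sum>s=m+1..m+m. of_int (z s) * e s) = (\<Sum>k=1..m. of_int (z (k+m)) * e (k+m))"
      using sum.shift_bounds_cl_nat_ivl[of "\<lambda>s. of_int (z s) * e s" 1 m m] by (simp add: add.commute)
    also have "\<dots> = - (\<Sum>k=1..m. a h i * \<sigma> h (\<omega> k) * of_int (y k))"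
      by (simp add: sum_negf[symmetric] z_def e_def mult.commute mult.left_commute)
    finally show ?thesis unfolding L_def by simp
  qed
  have vRe: "v (2*m+1) = H * Re L"
  proof -
    have "v (2*m+1) = (\<Sum>s=1..2*m. H * Re (of_int (z s) * e s))"
      unfolding v_def by (rule sum.cong) (auto simp: gen_col_def Let_def e_def)
    also have "\<dots> = H * Re (\<Sum>s=1..2*m. of_int (z s) * e s)"
      by (simp add: sum_distrib_left)
    finally show ?thesis by (simp only: sumL)
  qed
  have vIm: "v (2*m+2) = H * Im L"
  proof -
    have "v (2*m+2) = (\<Sum>s=1..2*m. H * Im (of_int (z s) * e s))"
      unfolding v_def by (rule sum.cong) (auto simp: gen_col_def Let_def e_def)
    also have "\<dots> = H * Im (\<Sum>s=1..2*m. of_int (z s) * e s)"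
      by (simp add: sum_distrib_left)
    finally show ?thesis by (simp only: sumL)
  qed
  have vv: "vinner (2*m+2) v v \<le> 2*m*A^2 + H^2 * (cmod L)^2"
  proof -
    have e1: "vinner (2*m+2) v v = (\<Sum>t=1..2*m. (v t)^2) + (v (2*m+1))^2 + (v (2*m+2))^2"
      unfolding vinner_def by (simp add: power2_eq_square)
    have "(\<Sum>t=1..2*m. (v t)^2) = (\<Sum>t=1..2*m. (of_int (z t))^2)"
      by (rule sum.cong) (auto simp: vlow)
    also have "\<dots> \<le> (\<Sum>t=1..2*m. A^2)"
    proof (rule sum_mono)
      fix t assume t: "t \<in> {1..2*m}"
      have "\<bar>of_int (z t)::real\<bar> \<le> A" using zle[OF t] unfolding A_def by linarith
      thus "(of_int (z t)::real)^2 \<le> A^2" by (metis abs_ge_zero power2_abs power_mono)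
    qed
    finally have e2: "(\<Sum>t=1..2*m. (v t)^2) \<le> 2*m*A^2" by simp
    have e3: "(v (2*m+1))^2 + (v (2*m+2))^2 = H^2 * (cmod L)^2"
      unfolding vRe vIm cmod_power2 by (simp add: power_mult_distrib algebra_simps)
    show ?thesis using e1 e2 e3 by linarith
  qed
  have vmem: "v \<in> lattice_gen (2*m) b"
    using basis unfolding lattice_basis_def v_def lattice_gen_def by blast
  then obtain z' where z': "v = (\<lambda>t. \<Sum>s=1..2*m. of_int (z' s) * b s t)"
    unfolding lattice_gen_def by blast
  have nz': "\<exists>s\<in>{1..2*m}. z' s \<noteq> 0"
  proof (rule ccontr)
    assume "\<not> ?thesis"
    hence v0: "\<And>t. v t = 0" unfolding z' by simp
    obtain k where k: "k \<in> {1..m}" "x k \<noteq> 0 \<or> y k \<noteq> 0" using nz by blast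
    show False
    proof (cases "x k = 0")
      case False
      have "v k = of_int (z k)" using k by (intro vlow) auto
      thus False using v0[of k] False k by (simp add: z_def)
    next
      case True
      have "v (m+k) = of_int (z (m+k))" using k by (intro vlow) auto
      thus False using v0[of "m+k"] True k by (simp add: z_def)
    qed
  qed
  have short: "vinner (2*m+2) (b 1) (b 1) \<le> 2^(2*m-1) * vinner (2*m+2) v v"
    by (rule lll_short[OF lll _ z' nz']) (use m1 in simp)
  define C where "C = (2*real m+1) * 2^(2*m-1)"
  have Cpos: "C > 0" unfolding C_def by simp
  have "sqrt C * A0 \<le> sqrt (vinner (2*m+2) (b 1) (b 1))"
    using b1big unfolding vnorm_def C_def by (simp add: algebra_simps)
  hence "(sqrt C * A0)^2 \<le> (sqrt (vinner (2*m+2) (b 1) (b 1)))^2"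
    using A0pos Cpos by (intro power_mono) auto
  hence "C * A0^2 \<le> vinner (2*m+2) (b 1) (b 1)"
    using Cpos vinner_nonneg[of "2*m+2" "b 1"] by (simp add: power_mult_distrib)
  hence "C * A0^2 \<le> 2^(2*m-1) * (2*m*A^2 + H^2 * (cmod L)^2)"
    using short vv by (smt (verit) mult_left_mono zero_le_power)
  hence "(2*real m+1) * A0^2 \<le> 2*m*A^2 + H^2 * (cmod L)^2"
    unfolding C_def by (simp add: mult.assoc)
  moreover have "A^2 \<le> A0^2" using AA0 A1 by (intro power_mono) auto
  ultimately have "A0^2 \<le> (H * cmod L)^2"
    by (simp add: power_mult_distrib algebra_simps) (smt (verit) mult_left_mono of_nat_0_le_iff)
  hence "A0 \<le> H * cmod L"
    using A0pos Hpos by (meson abs_ge_zero power2_le_imp_le mult_nonneg_nonneg norm_ge_zero less_imp_le)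
  also have "\<dots> \<le> H * (d * A powr (1 - real n))"
    using approx' Hpos by simp
  finally have key: "A0 \<le> H * d * A powr (1 - real n)" by simp
  have Apos: "A > 0" using A1 by simp
  have "A powr (1 - real n) = 1 / A powr (real n - 1)"
    by (simp add: powr_diff powr_minus_divide Apos)
  hence inv: "A powr (1 - real n) * A powr (real n - 1) = 1" using Apos by simp
  have "A0 * A powr (real n - 1) \<le> H * d * A powr (1 - real n) * A powr (real n - 1)"
    using key by (rule mult_right_mono) simp
  hence "A0 * A powr (real n - 1) \<le> H * d" using inv by (simp add: mult.assoc)
  hence An: "A powr (real n - 1) \<le> d * H / A0" using A0pos by (simp add: field_simps)
  have n1: "real n - 1 > 0" using n2 by simp
  have "A = (A powr (real n - 1)) powr (1 / (real n - 1))"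
    using n1 Apos by (simp add: powr_powr)
  also have "\<dots> \<le> (d * H / A0) powr (1 / (real n - 1))"
    using An n1 by (intro powr_mono2) auto
  finally show ?thesis unfolding A_def Ai_def d_def .
qed

end
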